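(* Let $\lambda,\mu\in(0,1)$ with $\lambda+\mu>1$, and let $c:=(1-\mu)/\lambda$. Define $f_1:[0,c]\to[0,1]$, $f_1(x)=\lambda x+\mu$, and $f_2:[c,1]\to[0,1]$, $f_2(x)=\lambda x+\mu-1$. Then every map $f:[0,1]\to[0,1]$ such that $f|_{[0,c)}=f_1|_{[0,c)}$, $f|_{(c,1]}=f_2|_{(c,1]}$ and $c\notin f^k([f(1),f(0)])$ for all $k\in\mathbb{N}$, satisfies properties P1–P6 below with $N=2$, $c_0=0$, $c_1=c$, $c_2=1$, $X_1=[0,c)$, $X_2=(c,1]$.
   Context: For $N\geqslant 2$, points $c_0<c_1<\dots<c_N$, $X=[c_0,c_N]$, $X_1=[c_0,c_1)$, $X_i=(c_{i-1},c_i)$ for $1<i<N$, $X_N=(c_{N-1},c_N]$, and a map $f:X\to X$, define: $\Delta:=\{c_1,\dots,c_{N-1}\}$; $f_i$ the continuous extension of $f|_{X_i}$ to $\overline{X_i}$ (when it exists); $\widetilde X:=\bigcap_{n\geqslant0}f^{-n}(X\setminus\Delta)$. Atoms: $F_i(A):=\overline{f(A\cap X_i)}$, $A_{i_1\dots i_n}:=F_{i_n}\circ\dots\circ F_{i_1}(X)$ is an atom of generation $n$ if non-empty, $\mathcal{A}_n$ their set, $\mathcal{A}_n(x):=\{A\in\mathcal{A}_n:\exists t\in\mathbb{N},f^{t+n}(x)\in A\}$; attractor $\Lambda:=\bigcap_{n\geqslant1}\bigcup_{A\in\mathcal{A}_n}A$. $\Delta_{lr}(x)$ is the set of $c_i\in\Delta$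 such that for every $n\geqslant1$ there is $A\in\mathcal{A}_n(x)$ with $c_i\in A$, $f^{t+n}(x)\in A\cap X_i$ and $f^{t'+n}(x)\in A\cap X_{i+1}$ for some $t,t'\in\mathbb{N}$. P1: $f$ is a piecewise contracting map with contraction pieces $X_1,\dots,X_N$ (i.e. $f$ is discontinuous at every point of $\Delta$ and contracting with a constant $<1$ on each $X_i$), and $f|_{X_i}$ is affine with slope $\lambda\in(0,1)$ (the same for all $i$). P2: $f$ satisfies the separation property: each $f_i$ is injective and $f_i(\overline{X_i})\cap f_j(\overline{X_j})=\emptyset$ for $i\neq j$. P3: the attractor $\Lambda$ is a Cantor set. P4: $\bigcup_{i=1}^{N-1}\{f_i(c_i),f_{i+1}(c_i)\}\subset\widetilde X$. P5: there is $i\in\{1,\dots,N-1\}$ such that $\{f^n(f_i(c_i))\}_{n\in\mathbb{N}}$ or $\{f^n(f_{i+1}(c_i))\}_{n\in\mathbb{N}}$ is dense in $\Lambda$. P6: for every $x\in\widetilde X$ and $i\in\{1,\dots,N-1\}$, $c_i\in\Delta_{lr}(x)$. *)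

theory Defs
  imports "HOL-Analysis.Analysis"
begin

text \<open>General setting: N \<ge> 2 and points cs 0 < cs 1 < ... < cs N; X = [cs 0, cs N].\<close>

definition XX :: "nat \<Rightarrow> (nat \<Rightarrow> real) \<Rightarrow> real set" where
  "XX N cs = {cs 0 .. cs N}"

definition Xp :: "nat \<Rightarrow> (nat \<Rightarrow> real) \<Rightarrow> nat \<Rightarrow> real set" where
  "Xp N cs i = (if i = 1 then {cs 0 ..< cs 1}
                else if i = N then {cs (N - 1) <.. cs N}
                else {cs (i - 1) <..< cs i})"

definition Delta :: "nat \<Rightarrow> (nat \<Rightarrow> real) \<Rightarrow> real set" where
  "Delta N cs = cs ` {1 .. N - 1}"

text \<open>f_i: the continuous extension of f restricted to X_i to the closure of X_i
  (on X_i it is f, at boundary points it is the limit of f within X_i).\<close>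
definition fext :: "(real \<Rightarrow> real) \<Rightarrow> nat \<Rightarrow> (nat \<Rightarrow> real) \<Rightarrow> nat \<Rightarrow> real \<Rightarrow> real" where
  "fext f N cs i x = (if x \<in> Xp N cs i then f x else Lim (at x within Xp N cs i) f)"

definition Xtilde :: "(real \<Rightarrow> real) \<Rightarrow> nat \<Rightarrow> (nat \<Rightarrow> real) \<Rightarrow> real set" where
  "Xtilde f N cs = (\<Inter>n. {x \<in> XX N cs. (f ^^ n) x \<in> XX N cs - Delta N cs})"

definition Fop :: "(real \<Rightarrow> real) \<Rightarrow> nat \<Rightarrow> (nat \<Rightarrow> real) \<Rightarrow> nat \<Rightarrow> real set \<Rightarrow> real set" where
  "Fop f N cs i A = closure (f ` (A \<inter> Xp N cs i))"

definition atom :: "(real \<Rightarrow> real) \<Rightarrow> nat \<Rightarrow> (nat \<Rightarrow> real) \<Rightarrow> nat list \<Rightarrow> real set" where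
  "atom f N cs w = fold (Fop f N cs) w (XX N cs)"

definition atoms :: "(real \<Rightarrow> real) \<Rightarrow> nat \<Rightarrow> (nat \<Rightarrow> real) \<Rightarrow> nat \<Rightarrow> real set set" where
  "atoms f N cs n = {atom f N cs w | w. length w = n \<and> set w \<subseteq> {1..N} \<and> atom f N cs w \<noteq> {}}"

definition atoms_of :: "(real \<Rightarrow> real) \<Rightarrow> nat \<Rightarrow> (nat \<Rightarrow> real) \<Rightarrow> nat \<Rightarrow> real \<Rightarrow> real set set" where
  "atoms_of f N cs n x = {A \<in> atoms f N cs n. \<exists>t::nat. (f ^^ (t + n)) x \<in> A}"

definition attractor :: "(real \<Rightarrow> real) \<Rightarrow> nat \<Rightarrow> (nat \<Rightarrow> real) \<Rightarrow> real set" where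
  "attractor f N cs = (\<Inter>n\<in>{1..}. \<Union> (atoms f N cs n))"

definition Delta_lr :: "(real \<Rightarrow> real) \<Rightarrow> nat \<Rightarrow> (nat \<Rightarrow> real) \<Rightarrow> real \<Rightarrow> real set" where
  "Delta_lr f N cs x = {cs i | i. i \<in> {1 .. N - 1} \<and>
     (\<forall>n\<ge>1. \<exists>A \<in> atoms_of f N cs n x. cs i \<in> A \<and>
        (\<exists>t::nat. (f ^^ (t + n)) x \<in> A \<inter> Xp N cs i) \<and>
        (\<exists>t'::nat. (f ^^ (t' + n)) x \<in> A \<inter> Xp N cs (Suc i)))}"

definition cantor_set :: "real set \<Rightarrow> bool" where
  "cantor_set K \<longleftrightarrow> K \<noteq> {} \<and> compact K \<and> (\<forall>x\<in>K. x islimpt K) \<and>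
     (\<forall>x\<in>K. connected_component_set K x = {x})"

definition piecewise_contracting :: "(real \<Rightarrow> real) \<Rightarrow> nat \<Rightarrow> (nat \<Rightarrow> real) \<Rightarrow> bool" where
  "piecewise_contracting f N cs \<longleftrightarrow>
     (\<forall>i\<in>{1 .. N - 1}. \<not> continuous (at (cs i) within XX N cs) f) \<and>
     (\<exists>k::real. 0 \<le> k \<and> k < 1 \<and>
        (\<forall>i\<in>{1..N}. \<forall>x\<in>Xp N cs i. \<forall>y\<in>Xp N cs i. \<bar>f x - f y\<bar> \<le> k * \<bar>x - y\<bar>))"

definition P1 :: "(real \<Rightarrow> real) \<Rightarrow> nat \<Rightarrow> (nat \<Rightarrow> real) \<Rightarrow> bool" where
  "P1 f N cs \<longleftrightarrow> piecewise_contracting f N cs \<and>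
     (\<exists>lam::real. 0 < lam \<and> lam < 1 \<and>
        (\<forall>i\<in>{1..N}. \<exists>b::real. \<forall>x\<in>Xp N cs i. f x = lam * x + b))"

definition P2 :: "(real \<Rightarrow> real) \<Rightarrow> nat \<Rightarrow> (nat \<Rightarrow> real) \<Rightarrow> bool" where
  "P2 f N cs \<longleftrightarrow>
     (\<forall>i\<in>{1..N}. inj_on (fext f N cs i) (closure (Xp N cs i))) \<and>
     (\<forall>i\<in>{1..N}. \<forall>j\<in>{1..N}. i \<noteq> j \<longrightarrow>
        fext f N cs i ` closure (Xp N cs i) \<inter> fext f N cs j ` closure (Xp N cs j) = {})"

definition P3 :: "(real \<Rightarrow> real) \<Rightarrow> nat \<Rightarrow> (nat \<Rightarrow> real) \<Rightarrow> bool" where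
  "P3 f N cs \<longleftrightarrow> cantor_set (attractor f N cs)"

definition P4 :: "(real \<Rightarrow> real) \<Rightarrow> nat \<Rightarrow> (nat \<Rightarrow> real) \<Rightarrow> bool" where
  "P4 f N cs \<longleftrightarrow> (\<Union>i\<in>{1 .. N - 1}. {fext f N cs i (cs i), fext f N cs (Suc i) (cs i)})
     \<subseteq> Xtilde f N cs"

definition P5 :: "(real \<Rightarrow> real) \<Rightarrow> nat \<Rightarrow> (nat \<Rightarrow> real) \<Rightarrow> bool" where
  "P5 f N cs \<longleftrightarrow> (\<exists>i\<in>{1 .. N - 1}.
     attractor f N cs \<subseteq> closure (range (\<lambda>n. (f ^^ n) (fext f N cs i (cs i)))) \<or>
     attractor f N cs \<subseteq> closure (range (\<lambda>n. (f ^^ n) (fext f N cs (Suc i) (cs i)))))"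

definition P6 :: "(real \<Rightarrow> real) \<Rightarrow> nat \<Rightarrow> (nat \<Rightarrow> real) \<Rightarrow> bool" where
  "P6 f N cs \<longleftrightarrow> (\<forall>x\<in>Xtilde f N cs. \<forall>i\<in>{1 .. N - 1}. cs i \<in> Delta_lr f N cs x)"

end

theory Submission imports Defs begin

locale cr =
  fixes lam mu c :: real and f :: "real \<Rightarrow> real"
  assumes lam0: "0 < lam" and lam1: "lam < 1" and mu0: "0 < mu" and mu1: "mu < 1"
    and lm: "lam + mu > 1"
    and cdef: "c = (1 - mu) / lam"
    and fmap: "f ` {0..1} \<subseteq> {0..1}"
    and fL: "\<forall>x\<in>{0..<c}. f x = lam * x + mu"
    and fR: "\<forall>x\<in>{c<..1}. f x = lam * x + mu - 1"
    and hyp: "\<forall>k::nat. c \<notin> (f ^^ k) ` {f 1 .. f 0}"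
begin

definition b where "b = lam + mu - 1"
definition l where "l k = (f ^^ k) b"
definition r where "r k = (f ^^ k) mu"
definition E where "E = {x\<in>{0..1}. \<forall>k. x \<notin> {l k<..<r k}}"

lemma c_pos: "0 < c" and c_lt1: "c < 1" and lamc: "lam * c = 1 - mu"
  using lam0 lm mu1 by (auto simp: cdef field_simps)

lemma b_pos: "0 < b" and b_mu: "b < mu" using lm lam1 by (auto simp: b_def)

lemma f0: "f 0 = mu" using fL c_pos by auto
lemma f1: "f 1 = b" using fR c_lt1 by (auto simp: b_def)

lemma fL': "0 \<le> x \<Longrightarrow> x < c \<Longrightarrow> f x = lam * x + mu" using fL by auto
lemma fR': "c < x \<Longrightarrow> x \<le> 1 \<Longrightarrow> f x = lam * x + mu - 1" using fR by auto

lemma fval: assumes "0 \<le> y" "y \<le> 1" "y \<noteq> c"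
  shows "0 < f y \<and> f y < 1 \<and> (y < c \<longrightarrow> f y \<ge> mu) \<and> (y > c \<longrightarrow> f y \<le> b)"
proof (cases "y < c")
  case True
  have "lam * y < lam * c" using True lam0 by simp
  moreover have "0 \<le> lam * y" using assms lam0 by simp
  ultimately show ?thesis using fL'[OF assms(1) True] mu0 lamc True by linarith
next
  case False
  then have cy: "c < y" using assms by auto
  have "lam * c < lam * y" using cy lam0 by simp
  moreover have "lam * y \<le> lam" using assms lam0 by simp
  ultimately have "0 < f y" "f y < 1" "f y \<le> b"
    using fR'[OF cy assms(2)] lamc b_mu mu1 by (auto simp: b_def)
  then show ?thesis using cy by auto
qed

lemma f_inj: assumes "0 \<le> x" "x \<le> 1" "x \<noteq> c" "0 \<le> y" "y \<le> 1" "y \<noteq> c" "f x = f y"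
  shows "x = y"
proof -
  consider "x < c" "y < c" | "x > c" "y > c" | "x < c" "y > c" | "x > c" "y < c"
    using assms by linarith
  then show ?thesis
  proof cases
    case 1 then show ?thesis using assms fL' lam0 by auto
  next
    case 2 then show ?thesis using assms fR' lam0 by auto
  next
    case 3
    have "f x \<ge> mu" "f y \<le> b" using fval[of x] fval[of y] assms 3 by auto
    then show ?thesis using assms b_mu by auto
  next
    case 4
    have "f y \<ge> mu" "f x \<le> b" using fval[of x] fval[of y] assms 4 by auto
    then show ?thesis using assms b_mu by auto
  qed
qed

lemma l0: "l 0 = b" and r0: "r 0 = mu" by (auto simp: l_def r_def)
lemma lSuc: "l (Suc k) = f (l k)" and rSuc: "r (Suc k) = f (r k)" by (auto simp: l_def r_def)

lemma J_facts: "0 < l k \<and> r k < 1 \<and> r k - l k = lam ^ k * (1 - lam) \<and> (r k < c \<or> c < l k)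
   \<and> (f ^^ k) ` {b..mu} = {l k..r k}"
proof (induction k)
  case 0
  have "c \<notin> {b..mu}" using hyp[rule_format, of 0] by (simp add: f0 f1)
  then show ?case using b_pos mu1 by (auto simp: l0 r0 b_def)
next
  case (Suc k)
  have "(f ^^ Suc k) ` {b..mu} = f ` ((f ^^ k) ` {b..mu})" by (simp add: image_image)
  then have img: "(f ^^ Suc k) ` {b..mu} = f ` {l k..r k}" using Suc.IH by simp
  have lr: "l k \<le> r k" using Suc.IH lam0 lam1 by (smt (verit) mult_pos_pos zero_less_power)
  have img2: "f ` {l k..r k} = {l (Suc k)..r (Suc k)} \<and> 0 < l (Suc k) \<and> r (Suc k) < 1
     \<and> r (Suc k) - l (Suc k) = lam * (r k - l k)"
  proof (cases "r k < c")
    case True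
    have e1: "f (l k) = lam * l k + mu" "f (r k) = lam * r k + mu"
      using True Suc.IH lr by (auto intro!: fL')
    have "f ` {l k..r k} = (\<lambda>x. lam * x + mu) ` {l k..r k}"
      using True Suc.IH by (intro image_cong) (auto intro!: fL')
    also have "\<dots> = {lam * l k + mu .. lam * r k + mu}"
      using lr lam0 by (simp add: image_affinity_atLeastAtMost)
    finally have i: "f ` {l k..r k} = {l (Suc k)..r (Suc k)}" using e1 by (simp add: lSuc rSuc)
    have "lam * r k < lam * c" using True lam0 by simp
    then have "r (Suc k) < 1" using e1 lamc by (simp add: rSuc)
    moreover have "0 < l (Suc k)" using e1 lam0 mu0 Suc.IH by (simp add: lSuc add_pos_pos)
    moreover have "r (Suc k) - l (Suc k) = lam * (r k - l k)" using e1 by (simp add: lSuc rSuc algebra_simps)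
    ultimately show ?thesis using i by blast
  next
    case False
    then have cl: "c < l k" using Suc.IH by auto
    have e1: "f (l k) = lam * l k + mu - 1" "f (r k) = lam * r k + mu - 1"
      using cl Suc.IH lr by (auto intro!: fR')
    have "f ` {l k..r k} = (\<lambda>x. lam * x + (mu - 1)) ` {l k..r k}"
      using cl Suc.IH by (intro image_cong) (auto simp: fR')
    also have "\<dots> = {lam * l k + (mu - 1) .. lam * r k + (mu - 1)}"
      using lr lam0 by (simp add: image_affinity_atLeastAtMost)
    finally have i: "f ` {l k..r k} = {l (Suc k)..r (Suc k)}" using e1 by (simp add: lSuc rSuc)
    have "lam * c < lam * l k" using cl lam0 by simp
    then have "0 < l (Suc k)" using e1 lamc by (simp add: lSuc)
    moreover have "lam * r k < lam" using Suc.IH lam0 by simp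
    then have "r (Suc k) < 1" using e1 mu1 lam1 unfolding rSuc by linarith
    moreover have "r (Suc k) - l (Suc k) = lam * (r k - l k)" using e1 by (simp add: lSuc rSuc algebra_simps)
    ultimately show ?thesis using i by blast
  qed
  have "c \<notin> {l (Suc k)..r (Suc k)}" using hyp[rule_format, of "Suc k"] img img2
    by (simp add: f0 f1)
  then show ?case using img img2 Suc.IH by auto
qed


lemma lr_lt: "l k < r k"
proof -
  have "0 < lam ^ k * (1 - lam)" using lam0 lam1 by simp
  then show ?thesis using J_facts[of k] by linarith
qed

lemma l_pos: "0 < l k" and r_lt1: "r k < 1" and side: "r k < c \<or> c < l k"
  using J_facts[of k] by auto

lemma J_img: "{l (Suc k)..r (Suc k)} = f ` {l k..r k}"
proof -
  have "(f ^^ Suc k) ` {b..mu} = f ` ((f ^^ k) ` {b..mu})" by (simp add: image_image)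
  then show ?thesis using J_facts[of k] J_facts[of "Suc k"] by simp
qed

lemma c_notJ: "c \<notin> {l k..r k}" using side[of k] by auto

lemma J_disj0: "{l 0..r 0} \<inter> {l (Suc i)..r (Suc i)} = {}"
proof (cases "r i < c")
  case True
  have "f (l i) = lam * l i + mu" using True lr_lt[of i] l_pos[of i] by (intro fL') auto
  then have "l (Suc i) > mu" using l_pos[of i] lam0 by (simp add: lSuc)
  then show ?thesis by (auto simp: r0)
next
  case False
  then have cl: "c < l i" using side[of i] by auto
  have "f (r i) = lam * r i + mu - 1" using cl lr_lt[of i] r_lt1[of i] by (intro fR') auto
  moreover have "lam * r i < lam" using r_lt1[of i] lam0 by simp
  ultimately have "r (Suc i) < b" by (simp add: rSuc b_def)
  then show ?thesis by (auto simp: l0)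
qed

lemma J_sub01: "x \<in> {l k..r k} \<Longrightarrow> 0 \<le> x \<and> x \<le> 1 \<and> x \<noteq> c"
  using l_pos[of k] r_lt1[of k] c_notJ[of k] by auto

lemma J_disj_shift: "{l k..r k} \<inter> {l (k + Suc i)..r (k + Suc i)} = {}"
proof (induction k)
  case 0
  then show ?case using J_disj0 by simp
next
  case (Suc k)
  show ?case
  proof (rule ccontr)
    assume "{l (Suc k)..r (Suc k)} \<inter> {l (Suc k + Suc i)..r (Suc k + Suc i)} \<noteq> {}"
    then obtain z where z1: "z \<in> f ` {l k..r k}" and z2: "z \<in> f ` {l (k + Suc i)..r (k + Suc i)}"
      using J_img[of k] J_img[of "k + Suc i"] by auto
    obtain y1 where y1: "y1 \<in> {l k..r k}" "z = f y1" using z1 by auto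
    obtain y2 where y2: "y2 \<in> {l (k + Suc i)..r (k + Suc i)}" "z = f y2" using z2 by auto
    have "y1 = y2" using f_inj[of y1 y2] J_sub01[OF y1(1)] J_sub01[OF y2(1)] y1 y2 by auto
    then show False using Suc.IH y1(1) y2(1) by blast
  qed
qed

lemma J_disj: assumes "k \<noteq> m" shows "{l k..r k} \<inter> {l m..r m} = {}"
proof (cases "k < m")
  case True
  then have "m = k + Suc (m - k - 1)" by simp
  then obtain i where "m = k + Suc i" by blast
  then show ?thesis using J_disj_shift[of k i] by simp
next
  case False
  then have "m < k" using assms by simp
  then have "k = m + Suc (k - m - 1)" by simp
  then obtain i where "k = m + Suc i" by blast
  then show ?thesis using J_disj_shift[of m i] by (simp add: Int_commute)
qed

lemma gap_step: assumes "0 \<le> y" "y \<le> 1" "y \<noteq> c"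
  shows "f y \<in> {l (Suc k)<..<r (Suc k)} \<longleftrightarrow> y \<in> {l k<..<r k}"
proof
  assume A: "f y \<in> {l (Suc k)<..<r (Suc k)}"
  then have "f y \<in> f ` {l k..r k}" using J_img[of k] by auto
  then obtain y' where y': "y' \<in> {l k..r k}" "f y = f y'" by auto
  have yy: "y = y'" using f_inj[of y y'] assms J_sub01[OF y'(1)] y' by auto
  have "y \<noteq> l k" using A by (auto simp: lSuc)
  moreover have "y \<noteq> r k" using A by (auto simp: rSuc)
  ultimately show "y \<in> {l k<..<r k}" using y' yy by auto
next
  assume A: "y \<in> {l k<..<r k}"
  then have "f y \<in> {l (Suc k)..r (Suc k)}" using J_img[of k] by auto
  moreover have "f y \<noteq> l (Suc k)"
  proof
    assume "f y = l (Suc k)"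
    then have "y = l k" using f_inj[of y "l k"] assms J_sub01[of "l k" k] lr_lt[of k] by (auto simp: lSuc)
    then show False using A by auto
  qed
  moreover have "f y \<noteq> r (Suc k)"
  proof
    assume "f y = r (Suc k)"
    then have "y = r k" using f_inj[of y "r k"] assms J_sub01[of "r k" k] lr_lt[of k] by (auto simp: rSuc)
    then show False using A by auto
  qed
  ultimately show "f y \<in> {l (Suc k)<..<r (Suc k)}" by auto
qed

lemma f_notJ0: "0 \<le> y \<Longrightarrow> y \<le> 1 \<Longrightarrow> y \<noteq> c \<Longrightarrow> f y \<notin> {l 0<..<r 0}"
  using fval[of y] by (cases "y < c") (auto simp: l0 r0)

lemma E_01: "x \<in> E \<Longrightarrow> 0 \<le> x \<and> x \<le> 1" by (auto simp: E_def)

lemma l_E: "l m \<in> E"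
proof -
  have "l m \<notin> {l k<..<r k}" for k
    using J_disj[of m k] lr_lt[of m] by (cases "k = m") auto
  then show ?thesis using l_pos[of m] lr_lt[of m] r_lt1[of m] by (auto simp: E_def)
qed

lemma r_E: "r m \<in> E"
proof -
  have "r m \<notin> {l k<..<r k}" for k
    using J_disj[of m k] lr_lt[of m] by (cases "k = m") auto
  then show ?thesis using l_pos[of m] lr_lt[of m] r_lt1[of m] by (auto simp: E_def)
qed

lemma c_E: "c \<in> E"
proof -
  have "c \<notin> {l k<..<r k}" for k using c_notJ[of k] by auto
  then show ?thesis using c_pos c_lt1 by (auto simp: E_def)
qed
lemma zero_E: "0 \<in> E" using l_pos by (auto simp: E_def) (meson less_asym l_pos)
lemma one_E: "1 \<in> E" using r_lt1 by (auto simp: E_def) (meson less_asym r_lt1)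

lemma f_E: assumes "y \<in> E" "y \<noteq> c" shows "f y \<in> E"
proof -
  have y01: "0 \<le> y" "y \<le> 1" using assms E_01 by auto
  have "f y \<notin> {l k<..<r k}" for k
  proof (cases k)
    case 0 then show ?thesis using f_notJ0 y01 assms by auto
  next
    case (Suc k')
    then show ?thesis using gap_step[OF y01 assms(2), of k'] assms(1) by (auto simp: E_def)
  qed
  moreover have "0 \<le> f y \<and> f y \<le> 1" using fval[OF y01 assms(2)] by auto
  ultimately show ?thesis by (auto simp: E_def)
qed

lemma sum_len: "(\<Sum>k<n. r k - l k) = 1 - lam ^ n"
proof (induction n)
  case 0 then show ?case by simp
next
  case (Suc n)
  then show ?case using J_facts[of n] by (simp add: algebra_simps)
qed

lemma no_interval: assumes "0 \<le> p" "p < q" "q \<le> 1"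
  shows "\<exists>k z. p < z \<and> z < q \<and> l k < z \<and> z < r k"
proof (rule ccontr)
  assume na: "\<not> ?thesis"
  obtain n where n: "lam ^ n < q - p" using real_arch_pow_inv[of "q - p" lam] assms lam1 by auto
  define I where "I k = (if k < n then {l k<..<r k} else {p<..<q})" for k
  have disj: "disjoint_family_on I {..n}"
    unfolding disjoint_family_on_def
  proof (intro ballI impI)
    fix i j assume ij: "i \<in> {..n}" "j \<in> {..n}" "i \<noteq> j"
    show "I i \<inter> I j = {}"
    proof (cases "i < n \<and> j < n")
      case True
      then show ?thesis using J_disj[OF ij(3)] by (auto simp: I_def)
    next
      case False
      then have ijn: "i = n \<or> j = n" using ij by auto
      { fix z assume z: "z \<in> I i" "z \<in> I j"
        have False
        proof (cases "i = n")
          case True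
          then have "j < n" using ij by auto
          then show False using z na True by (auto simp: I_def)
        next
          case False
          then have "j = n" "i < n" using ij ijn by auto
          then show False using z na by (auto simp: I_def)
        qed }
      then show ?thesis by blast
    qed
  qed
  have meas: "measure lborel (I k) = (if k < n then r k - l k else q - p)" for k
    using lr_lt[of k] assms by (auto simp: I_def measure_lborel_Ioo)
  have "measure lborel (\<Union>(I ` {..n})) = (\<Sum>k\<in>{..n}. measure lborel (I k))"
  proof (rule measure_finite_Union[OF _ _ disj])
    show "I ` {..n} \<subseteq> sets lborel" unfolding I_def by auto
    show "emeasure lborel (I i) \<noteq> \<infinity>" for i
      using emeasure_lborel_Ioo[of "l i" "r i"] emeasure_lborel_Ioo[of p q] lr_lt[of i] assms(2)
      unfolding I_def by simp
  qed simp
  also have "\<dots> = (\<Sum>k<n. r k - l k) + (q - p)"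
    by (simp add: lessThan_Suc_atMost[symmetric] meas)
  also have "\<dots> = 1 - lam ^ n + (q - p)" by (simp add: sum_len)
  finally have eq: "measure lborel (\<Union>(I ` {..n})) = 1 - lam ^ n + (q - p)" .
  have sub: "\<Union>(I ` {..n}) \<subseteq> {0..1}"
    using assms l_pos r_lt1 by (auto simp: I_def) (meson less_imp_le less_le_trans, meson less_imp_le less_trans)
  have fm: "{0..1::real} \<in> fmeasurable lborel" by (simp add: fmeasurable_def)
  have "measure lborel (\<Union>(I ` {..n})) \<le> measure lborel {0..1::real}"
    by (rule measure_mono_fmeasurable[OF sub _ fm]) (auto simp: I_def)
  then show False using eq n by simp
qed

lemma E_left: assumes "0 < x" "x \<le> 1" "\<forall>m. \<not> (l m < x \<and> x \<le> r m)" "0 < d"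
  shows "\<exists>e\<in>E. x - d < e \<and> e < x"
proof -
  define z where "z = x - min d x / 2"
  have z: "0 < z" "z < x" "x - d < z" using assms by (auto simp: z_def)
  show ?thesis
  proof (cases "z \<in> E")
    case True then show ?thesis using z by auto
  next
    case False
    then obtain m where m: "l m < z" "z < r m" using z assms by (auto simp: E_def)
    have "r m < x" using assms(3) m z by (meson less_trans not_le)
    then show ?thesis using r_E[of m] m z by (intro bexI[of _ "r m"]) auto
  qed
qed

lemma E_right: assumes "0 \<le> x" "x < 1" "\<forall>m. \<not> (l m \<le> x \<and> x < r m)" "0 < d"
  shows "\<exists>e\<in>E. x < e \<and> e < x + d"
proof -
  define z where "z = x + min d (1 - x) / 2"
  define mm where "mm = min d (1 - x)"
  have m: "mm \<le> 1 - x" "mm \<le> d" "0 < mm" using assms by (auto simp: mm_def)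
  have z1: "z < 1" unfolding z_def mm_def[symmetric] using m by linarith
  have z2: "x < z" unfolding z_def mm_def[symmetric] using m by linarith
  have z3: "z < x + d" unfolding z_def mm_def[symmetric] using m by linarith
  note z = z1 z2 z3
  show ?thesis
  proof (cases "z \<in> E")
    case True then show ?thesis using z by auto
  next
    case False
    then obtain m where m: "l m < z" "z < r m" using z assms by (auto simp: E_def)
    have "x < l m" using assms(3) m z by (meson less_trans not_le)
    then show ?thesis using l_E[of m] m z by (intro bexI[of _ "l m"]) auto
  qed
qed

lemma between: assumes "x \<in> E" "y \<in> E" "x < y" shows "\<exists>k. x \<le> l k \<and> r k \<le> y"
proof -
  obtain k z where kz: "x < z" "z < y" "l k < z" "z < r k"
    using no_interval[of x y] assms E_01 by blast
  have "x \<notin> {l k<..<r k}" "y \<notin> {l k<..<r k}" using assms by (auto simp: E_def)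
  then have "x \<le> l k" "r k \<le> y" using kz by auto
  then show ?thesis by blast
qed

lemma E_perfect: assumes "x \<in> E" "0 < d" shows "\<exists>y\<in>E. y \<noteq> x \<and> \<bar>y - x\<bar> < d"
proof -
  have x01: "0 \<le> x" "x \<le> 1" using assms E_01 by auto
  have xg: "\<not> (l m < x \<and> x < r m)" for m using assms by (auto simp: E_def)
  show ?thesis
  proof (cases "x < 1 \<and> (\<forall>m. \<not> (l m \<le> x \<and> x < r m))")
    case True
    then obtain e where "e \<in> E" "x < e" "e < x + d" using E_right[of x d] x01 assms by auto
    then show ?thesis by (intro bexI[of _ e]) auto
  next
    case F1: False
    show ?thesis
    proof (cases "0 < x \<and> (\<forall>m. \<not> (l m < x \<and> x \<le> r m))")
      case True
      then obtain e where "e \<in> E" "x - d < e" "e < x" using E_left[of x d] x01 assms by auto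
      then show ?thesis by (intro bexI[of _ e]) auto
    next
      case F2: False
      have A: "x = 1 \<or> (\<exists>m. x = l m)" using F1 xg x01 by (metis not_less order_le_less)
      have B: "x = 0 \<or> (\<exists>m. x = r m)" using F2 xg x01 by (metis not_less order_le_less)
      have False
      proof -
        { assume "x = 1" "x = 0" then have False by simp }
        moreover { fix m assume "x = 1" "x = r m" then have False using r_lt1[of m] by simp }
        moreover { fix m assume "x = l m" "x = 0" then have False using l_pos[of m] by simp }
        moreover { fix m m' assume "x = l m" "x = r m'"
          then have False using J_disj[of m m'] lr_lt[of m] lr_lt[of m']
            by (cases "m = m'") (auto simp: disjoint_iff) }
        ultimately show False using A B by blast
      qed
      then show ?thesis ..
    qed
  qed
qed

lemma gap_near_c_left0: assumes "0 < d" shows "\<exists>k. c - d < l k \<and> r k < c"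
proof -
  have "\<forall>m. \<not> (l m < c \<and> c \<le> r m)"
  proof
    fix m show "\<not> (l m < c \<and> c \<le> r m)" using c_notJ[of m] by auto
  qed
  then obtain e where e: "e \<in> E" "c - d < e" "e < c"
    using E_left[of c d] c_pos c_lt1 assms by auto
  obtain k where k: "e \<le> l k" "r k \<le> c" using between[OF e(1) c_E e(3)] by auto
  have rk: "r k < c" using k c_notJ[of k] lr_lt[of k] by (auto simp: order_le_less)
  show ?thesis using k e rk by (intro exI[of _ k]) auto
qed

lemma gap_near_c_left: "0 < d \<Longrightarrow> \<exists>k\<ge>k0. c - d < l k \<and> r k < c"
proof (induction k0 arbitrary: d)
  case 0 then show ?case using gap_near_c_left0 by auto
next
  case (Suc k0)
  obtain k where k: "k \<ge> k0" "c - d < l k" "r k < c" using Suc by blast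
  show ?case
  proof (cases "k = k0")
    case False then show ?thesis using k by (intro exI[of _ k]) auto
  next
    case True
    have "0 < c - r k0" using k True by simp
    then obtain k' where k': "k' \<ge> k0" "c - (c - r k0) < l k'" "r k' < c" using Suc.IH by blast
    have "k' \<noteq> k0" using k' lr_lt[of k0] by auto
    moreover have "c - d < l k'" using k k' True lr_lt[of k0] by simp
    ultimately show ?thesis using k' by (intro exI[of _ k']) auto
  qed
qed

lemma gap_near_c_right0: assumes "0 < d" shows "\<exists>k. c < l k \<and> r k < c + d"
proof -
  have "\<forall>m. \<not> (l m \<le> c \<and> c < r m)"
  proof
    fix m show "\<not> (l m \<le> c \<and> c < r m)" using c_notJ[of m] by auto
  qed
  then obtain e where e: "e \<in> E" "c < e" "e < c + d"
    using E_right[of c d] c_pos c_lt1 assms by auto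
  obtain k where k: "c \<le> l k" "r k \<le> e" using between[OF c_E e(1) e(2)] by auto
  have lk: "c < l k" using k c_notJ[of k] lr_lt[of k] by (auto simp: order_le_less)
  show ?thesis using k e lk by (intro exI[of _ k]) auto
qed

lemma gap_near_c_right: "0 < d \<Longrightarrow> \<exists>k\<ge>k0. c < l k \<and> r k < c + d"
proof (induction k0 arbitrary: d)
  case 0 then show ?case using gap_near_c_right0 by auto
next
  case (Suc k0)
  obtain k where k: "k \<ge> k0" "c < l k" "r k < c + d" using Suc by blast
  show ?case
  proof (cases "k = k0")
    case False then show ?thesis using k by (intro exI[of _ k]) auto
  next
    case True
    have "0 < l k0 - c" using k True by simp
    then obtain k' where k': "k' \<ge> k0" "c < l k'" "r k' < c + (l k0 - c)" using Suc.IH by blast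
    have "k' \<noteq> k0" using k' lr_lt[of k0] by auto
    moreover have "r k' < c + d" using k k' True lr_lt[of k0] by simp
    ultimately show ?thesis using k' by (intro exI[of _ k']) auto
  qed
qed


abbreviation "cs \<equiv> (\<lambda>i::nat. if i = 0 then 0 else if i = 1 then c else (1::real))"

lemma XX_eq: "XX 2 cs = {0..1}" by (simp add: XX_def)
lemma Xp1: "Xp 2 cs 1 = {0..<c}" by (simp add: Xp_def)
lemma Xp2: "Xp 2 cs 2 = {c<..1}" by (simp add: Xp_def)
lemma Xp2': "Xp 2 cs (Suc 1) = {c<..1}" by (simp add: Xp_def)
lemma Xp1': "Xp 2 cs (Suc 0) = {0..<c}" by (simp add: Xp_def)
lemma Delta_eq: "Delta 2 cs = {c}" by (simp add: Delta_def)

lemma Xp_sub: "Xp 2 cs i \<subseteq> {0..1} - {c}"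
proof -
  consider "i = 0" | "i = 1" | "i = 2" | "i \<ge> 3" by linarith
  then show ?thesis
  proof cases
    case 1 then show ?thesis by (simp add: Xp_def)
  next
    case 2 then show ?thesis using c_pos c_lt1 by (auto simp: Xp_def)
  next
    case 3 then show ?thesis using c_lt1 c_pos by (auto simp: Xp_def)
  next
    case 4 then show ?thesis by (auto simp: Xp_def)
  qed
qed

lemma atom_Nil: "atom f 2 cs [] = {0..1}" by (simp add: atom_def XX_def)
lemma atom_snoc: "atom f 2 cs (w @ [i]) = Fop f 2 cs i (atom f 2 cs w)" by (simp add: atom_def)

lemma atom_closed: "closed (atom f 2 cs w)"
  by (induction w rule: rev_induct) (auto simp: atom_Nil atom_snoc Fop_def)

lemma atom_sub: "atom f 2 cs w \<subseteq> {0..1}"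
proof (induction w rule: rev_induct)
  case Nil then show ?case by (simp add: atom_Nil)
next
  case (snoc i w)
  have "f ` (atom f 2 cs w \<inter> Xp 2 cs i) \<subseteq> {0..1}" using snoc fmap by auto
  then show ?case unfolding atom_snoc Fop_def by (intro closure_minimal) auto
qed

lemma atom_gaps: "k < length w \<Longrightarrow> atom f 2 cs w \<inter> {l k<..<r k} = {}"
proof (induction w arbitrary: k rule: rev_induct)
  case Nil then show ?case by simp
next
  case (snoc i w)
  have "{l k<..<r k} \<inter> f ` (atom f 2 cs w \<inter> Xp 2 cs i) = {}"
  proof -
    { fix y assume y: "y \<in> atom f 2 cs w" "y \<in> Xp 2 cs i" "f y \<in> {l k<..<r k}"
      have y01: "0 \<le> y" "y \<le> 1" "y \<noteq> c" using y(2) Xp_sub[of i] by auto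
      have False
      proof (cases k)
        case 0 then show False using f_notJ0[OF y01] y by simp
      next
        case (Suc k')
        then have "y \<in> {l k'<..<r k'}" using gap_step[OF y01, of k'] y by simp
        moreover have "k' < length w" using Suc snoc.prems by simp
        ultimately show False using snoc.IH[of k'] y by auto
      qed }
    then show ?thesis by blast
  qed
  then have "{l k<..<r k} \<inter> closure (f ` (atom f 2 cs w \<inter> Xp 2 cs i)) = {}"
    by (subst open_Int_closure_eq_empty) auto
  then show ?case unfolding atom_snoc Fop_def by blast
qed

lemma pre_ex: assumes "x \<in> E" "0 < x" "x < 1"
  shows "\<exists>y\<in>E. y \<noteq> c \<and> f y = x"
proof (cases "mu \<le> x")
  case True
  define y where "y = (x - mu) / lam"
  have ly: "lam * y = x - mu" using lam0 by (simp add: y_def)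
  have y0: "0 \<le> y" using True lam0 by (simp add: y_def)
  have "lam * y < lam * c" using ly lamc assms by simp
  then have yc: "y < c" using lam0 by simp
  have fy: "f y = x" using fL'[OF y0 yc] ly by simp
  have "y \<in> E"
  proof -
    have "y \<notin> {l k<..<r k}" for k
      using gap_step[of y k] y0 yc c_lt1 fy assms(1) by (auto simp: E_def)
    then show ?thesis using y0 yc c_lt1 by (auto simp: E_def)
  qed
  then show ?thesis using fy yc by auto
next
  case False
  have "x \<notin> {l 0<..<r 0}" using assms(1) by (auto simp: E_def)
  then have xb: "x \<le> b" using False by (auto simp: l0 r0)
  define y where "y = (x - mu + 1) / lam"
  have ly: "lam * y = x - mu + 1" using lam0 by (simp add: y_def)
  have "lam * c < lam * y" using ly lamc assms by simp
  then have yc: "c < y" using lam0 by simp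
  have "lam * y \<le> lam * 1" using ly xb by (simp add: b_def)
  then have y1: "y \<le> 1" using lam0 by simp
  have fy: "f y = x" using fR'[OF yc y1] ly by simp
  have "y \<in> E"
  proof -
    have "y \<notin> {l k<..<r k}" for k
      using gap_step[of y k] yc c_pos y1 fy assms(1) by (auto simp: E_def)
    then show ?thesis using yc c_pos y1 by (auto simp: E_def)
  qed
  then show ?thesis using fy yc by auto
qed

lemma words_finite: "finite {w::nat list. set w \<subseteq> {1..2} \<and> length w = n}"
  by (rule finite_lists_length_eq) simp

lemma E_in_atoms: "x \<in> E \<Longrightarrow> \<exists>w. length w = n \<and> set w \<subseteq> {1..2} \<and> x \<in> atom f 2 cs w"
proof (induction n arbitrary: x)
  case 0 then show ?case using E_01 by (intro exI[of _ "[]"]) (auto simp: atom_Nil)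
next
  case (Suc n)
  define G where "G = \<Union>((\<lambda>w. atom f 2 cs w) ` {w. set w \<subseteq> {1..2} \<and> length w = Suc n})"
  have Gc: "closed G" unfolding G_def
  proof (rule closed_Union)
    show "finite ((\<lambda>w. atom f 2 cs w) ` {w. set w \<subseteq> {1..2} \<and> length w = Suc n})"
      by (rule finite_imageI[OF words_finite])
  qed (auto simp: atom_closed)
  have inner: "z \<in> G" if z: "z \<in> E" "0 < z" "z < 1" for z
  proof -
    obtain y where y: "y \<in> E" "y \<noteq> c" "f y = z" using pre_ex[OF z] by blast
    obtain w where w: "length w = n" "set w \<subseteq> {1..2}" "y \<in> atom f 2 cs w" using Suc.IH[OF y(1)] by blast
    define i where "i = (if y < c then 1 else 2::nat)"
    have yX: "y \<in> Xp 2 cs i" using y E_01[OF y(1)] by (auto simp: i_def Xp_def)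
    have "y \<in> atom f 2 cs w \<inter> Xp 2 cs i" using w yX by blast
    then have "f y \<in> f ` (atom f 2 cs w \<inter> Xp 2 cs i)" by (rule imageI)
    then have "z \<in> f ` (atom f 2 cs w \<inter> Xp 2 cs i)" using y by simp
    then have "z \<in> closure (f ` (atom f 2 cs w \<inter> Xp 2 cs i))" by (rule closure_subset[THEN subsetD])
    then have "z \<in> atom f 2 cs (w @ [i])" unfolding atom_snoc Fop_def .
    moreover have "i \<in> {1..2}" unfolding i_def by simp
    then have "w @ [i] \<in> {w. set w \<subseteq> {1..2} \<and> length w = Suc n}" using w by simp
    ultimately show ?thesis unfolding G_def by (rule UN_I[rotated])
  qed
  have "x \<in> G"
  proof -
    have x01: "0 \<le> x" "x \<le> 1" using Suc.prems E_01 by auto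
    consider "x = 0" | "x = 1" | "0 < x \<and> x < 1" using x01 by linarith
    then show ?thesis
    proof cases
      case 1
      have "\<forall>e>0. \<exists>y\<in>G. dist y x < e"
      proof (intro allI impI)
        fix e :: real assume e: "0 < e"
        have "\<forall>m. \<not> (l m \<le> 0 \<and> 0 < r m)" using l_pos by (meson not_le)
        then obtain y where "y \<in> E" "0 < y" "y < 0 + min e 1"
          using E_right[of 0 "min e 1"] e by auto
        then show "\<exists>y\<in>G. dist y x < e" using inner[of y] 1 by (intro bexI[of _ y]) (auto simp: dist_real_def)
      qed
      then show ?thesis using closed_approachable[OF Gc] by blast
    next
      case 2
      have "\<forall>e>0. \<exists>y\<in>G. dist y x < e"
      proof (intro allI impI)
        fix e :: real assume e: "0 < e"
        have "\<forall>m. \<not> (l m < 1 \<and> 1 \<le> r m)" using r_lt1 by (meson not_le)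
        then obtain y where "y \<in> E" "1 - min e 1 < y" "y < 1"
          using E_left[of 1 "min e 1"] e by auto
        then show "\<exists>y\<in>G. dist y x < e" using inner[of y] 2 by (intro bexI[of _ y]) (auto simp: dist_real_def)
      qed
      then show ?thesis using closed_approachable[OF Gc] by blast
    next
      case 3 then show ?thesis using inner Suc.prems by blast
    qed
  qed
  then show ?case unfolding G_def by blast
qed

lemma attractor_eq: "attractor f 2 cs = E"
proof
  show "attractor f 2 cs \<subseteq> E"
  proof
    fix x assume x: "x \<in> attractor f 2 cs"
    have xn: "\<exists>w. length w = n \<and> x \<in> atom f 2 cs w" if "n \<ge> 1" for n
      using x that unfolding attractor_def atoms_def by blast
    obtain w where "length w = 1" "x \<in> atom f 2 cs w" using xn[of 1] by auto
    then have x01: "x \<in> {0..1}" using atom_sub by blast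
    have "x \<notin> {l k<..<r k}" for k
    proof -
      obtain w where "length w = Suc k" "x \<in> atom f 2 cs w" using xn[of "Suc k"] by auto
      then show ?thesis using atom_gaps[of k w] by auto
    qed
    then show "x \<in> E" using x01 by (auto simp: E_def)
  qed
next
  show "E \<subseteq> attractor f 2 cs"
  proof
    fix x assume x: "x \<in> E"
    have "x \<in> \<Union>(atoms f 2 cs n)" for n
    proof -
      obtain w where w: "length w = n" "set w \<subseteq> {1..2}" "x \<in> atom f 2 cs w" using E_in_atoms[OF x] by blast
      then have "atom f 2 cs w \<in> atoms f 2 cs n" unfolding atoms_def by auto
      then show ?thesis using w by blast
    qed
    then show "x \<in> attractor f 2 cs" unfolding attractor_def by blast
  qed
qed

lemma E_closed: "closed E"
proof -
  have "E = {0..1} - (\<Union>k. {l k<..<r k})" by (auto simp: E_def)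
  then show ?thesis by (auto intro!: closed_Diff open_UN)
qed

lemma E_cantor: "cantor_set E"
  unfolding cantor_set_def
proof (intro conjI ballI)
  show "E \<noteq> {}" using c_E by auto
  have "E \<subseteq> {0..1}" using E_01 by auto
  then have "bounded E" by (rule bounded_subset[OF bounded_closed_interval])
  then show "compact E" using E_closed by (simp add: compact_eq_bounded_closed)
next
  fix x assume x: "x \<in> E"
  show "x islimpt E" unfolding islimpt_approachable_real using E_perfect[OF x] by blast
next
  fix x assume x: "x \<in> E"
  have "y = x" if y: "y \<in> connected_component_set E x" for y
  proof (rule ccontr)
    assume ne: "y \<noteq> x"
    have con: "connected (connected_component_set E x)" by (rule connected_connected_component)
    have sub: "connected_component_set E x \<subseteq> E" by (rule connected_component_subset)
    have xin: "x \<in> connected_component_set E x" using x connected_component_refl by fastforce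
    define p where "p = min x y"
    define q where "q = max x y"
    have pq: "p < q" "p \<in> connected_component_set E x" "q \<in> connected_component_set E x"
      using ne y xin by (auto simp: p_def q_def min_def max_def)
    have "t \<in> connected_component_set E x" if "p \<le> t" "t \<le> q" for t
      using con[unfolded connected_iff_interval] pq that by blast
    then have int: "{p..q} \<subseteq> E" using sub by auto
    have "0 \<le> p" "q \<le> 1" using pq sub E_01 by auto
    then obtain k z where kz: "p < z" "z < q" "l k < z" "z < r k" using no_interval[of p q] pq by blast
    then have "z \<in> E" using int by auto
    then show False using kz by (auto simp: E_def)
  qed
  moreover have "x \<in> connected_component_set E x" using x connected_component_refl by fastforce
  ultimately show "connected_component_set E x = {x}" by blast
qed

lemma P3_ok: "P3 f 2 cs" unfolding P3_def attractor_eq by (rule E_cantor)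


lemma c_limpt_left: "c islimpt {0..<c}"
  unfolding islimpt_approachable_real
proof (intro allI impI)
  fix e :: real assume e: "0 < e"
  show "\<exists>x'\<in>{0..<c}. x' \<noteq> c \<and> \<bar>x' - c\<bar> < e"
    using e c_pos by (intro bexI[of _ "c - min e c / 2"]) auto
qed

lemma c_limpt_right: "c islimpt {c<..1}"
  unfolding islimpt_approachable_real
proof (intro allI impI)
  fix e :: real assume e: "0 < e"
  show "\<exists>x'\<in>{c<..1}. x' \<noteq> c \<and> \<bar>x' - c\<bar> < e"
  proof (intro bexI[of _ "c + min e (1 - c) / 2"])
    define m where "m = min e (1 - c)"
    have "m \<le> 1 - c" "m \<le> e" "0 < m" using e c_lt1 by (auto simp: m_def)
    then show "c + min e (1 - c) / 2 \<in> {c<..1}" "c + min e (1 - c) / 2 \<noteq> c \<and> \<bar>c + min e (1 - c) / 2 - c\<bar> < e"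
      unfolding m_def[symmetric] by auto
  qed
qed

lemma tends_left: "(f \<longlongrightarrow> 1) (at c within {0..<c})"
proof -
  have "((\<lambda>x. lam * x + mu) \<longlongrightarrow> lam * c + mu) (at c within {0..<c})"
    by (intro tendsto_intros)
  moreover have "((\<lambda>x. lam * x + mu) \<longlongrightarrow> lam * c + mu) (at c within {0..<c}) =
      (f \<longlongrightarrow> lam * c + mu) (at c within {0..<c})"
    by (rule Lim_cong_within) (auto simp: fL')
  ultimately show ?thesis using lamc by simp
qed

lemma tends_right: "(f \<longlongrightarrow> 0) (at c within {c<..1})"
proof -
  have "((\<lambda>x. lam * x + mu - 1) \<longlongrightarrow> lam * c + mu - 1) (at c within {c<..1})"
    by (intro tendsto_intros)
  moreover have "((\<lambda>x. lam * x + mu - 1) \<longlongrightarrow> lam * c + mu - 1) (at c within {c<..1}) =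
      (f \<longlongrightarrow> lam * c + mu - 1) (at c within {c<..1})"
    by (rule Lim_cong_within) (auto simp: fR')
  ultimately show ?thesis using lamc by simp
qed

lemma nb_left: "at c within {0..<c} \<noteq> bot" using c_limpt_left trivial_limit_within by blast
lemma nb_right: "at c within {c<..1} \<noteq> bot" using c_limpt_right trivial_limit_within by blast

lemma fext1: assumes "0 \<le> x" "x \<le> c" shows "fext f 2 cs 1 x = lam * x + mu"
proof (cases "x = c")
  case True
  have "Lim (at c within {0..<c}) f = 1" by (rule tendsto_Lim[OF nb_left tends_left])
  then show ?thesis using True lamc by (simp add: fext_def Xp_def)
next
  case False
  then show ?thesis using assms fL' by (simp add: fext_def Xp_def)
qed

lemma fext2: assumes "c \<le> x" "x \<le> 1" shows "fext f 2 cs 2 x = lam * x + mu - 1"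
proof (cases "x = c")
  case True
  have "Lim (at c within {c<..1}) f = 0" by (rule tendsto_Lim[OF nb_right tends_right])
  then show ?thesis using True lamc c_pos c_lt1 by (simp add: fext_def Xp_def)
next
  case False
  then show ?thesis using assms fR' c_pos by (simp add: fext_def Xp_def)
qed

lemma fext1c: "fext f 2 cs 1 c = 1" using fext1[of c] c_pos lamc by simp
lemma fext2c: "fext f 2 cs 2 c = 0" using fext2[of c] c_lt1 lamc by simp

lemma cl1: "closure (Xp 2 cs 1) = {0..c}" unfolding Xp1 using c_pos by (simp add: closure_atLeastLessThan)
lemma cl1': "closure (Xp 2 cs (Suc 0)) = {0..c}" unfolding Xp1' using c_pos by (simp add: closure_atLeastLessThan)
lemma fext1': "0 \<le> x \<Longrightarrow> x \<le> c \<Longrightarrow> fext f 2 cs (Suc 0) x = lam * x + mu" using fext1 by simp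
lemma cl2: "closure (Xp 2 cs 2) = {c..1}" using c_lt1 by (simp add: Xp2 closure_greaterThanAtMost)

lemma P1_ok: "P1 f 2 cs"
proof -
  have disc: "\<not> continuous (at c within {0..1}) f"
  proof
    assume "continuous (at c within {0..1}) f"
    then have t: "(f \<longlongrightarrow> f c) (at c within {0..1})" by (simp add: continuous_within)
    have "(f \<longlongrightarrow> f c) (at c within {0..<c})" by (rule tendsto_within_subset[OF t]) (use c_lt1 in auto)
    then have "f c = 1" using tendsto_unique[OF nb_left _ tends_left] by blast
    moreover have "(f \<longlongrightarrow> f c) (at c within {c<..1})" by (rule tendsto_within_subset[OF t]) (use c_pos in auto)
    then have "f c = 0" using tendsto_unique[OF nb_right _ tends_right] by blast
    ultimately show False by simp
  qed
  have contr: "\<forall>i\<in>{1..2}. \<forall>x\<in>Xp 2 cs i. \<forall>y\<in>Xp 2 cs i. \<bar>f x - f y\<bar> \<le> lam * \<bar>x - y\<bar>"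
  proof (intro ballI)
    fix i x y assume i: "i \<in> {1..(2::nat)}" and x: "x \<in> Xp 2 cs i" and y: "y \<in> Xp 2 cs i"
    have "i = 1 \<or> i = 2" using i by auto
    then have "f x - f y = lam * (x - y)"
    proof
      assume "i = 1" then show ?thesis using x y fL' c_lt1 by (simp add: Xp1 Xp1' algebra_simps)
    next
      assume "i = 2"
      then have "c < x" "x \<le> 1" "c < y" "y \<le> 1" using x y by (auto simp: Xp2)
      then have "f x = lam * x + mu - 1" "f y = lam * y + mu - 1" using fR' by auto
      then show ?thesis by (simp add: algebra_simps)
    qed
    then show "\<bar>f x - f y\<bar> \<le> lam * \<bar>x - y\<bar>" using lam0 by (simp add: abs_mult)
  qed
  have aff: "\<forall>i\<in>{1..2}. \<exists>bb::real. \<forall>x\<in>Xp 2 cs i. f x = lam * x + bb"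
  proof
    fix i assume i: "i \<in> {1..(2::nat)}"
    then have "i = 1 \<or> i = 2" by auto
    then show "\<exists>bb::real. \<forall>x\<in>Xp 2 cs i. f x = lam * x + bb"
    proof
      assume "i = 1" then show ?thesis using fL' by (intro exI[of _ mu]) (simp add: Xp1 Xp1')
    next
      assume "i = 2" then show ?thesis using fR' by (intro exI[of _ "mu - 1"]) (simp add: Xp2)
    qed
  qed
  show ?thesis unfolding P1_def piecewise_contracting_def
    using disc contr aff lam0 lam1 by (auto simp: XX_eq intro!: exI[of _ lam])
qed

lemma P2_ok: "P2 f 2 cs"
proof -
  have inj1: "inj_on (fext f 2 cs 1) {0..c}"
    by (rule inj_onI) (use lam0 in \<open>auto simp: fext1 fext1'\<close>)
  have inj2: "inj_on (fext f 2 cs 2) {c..1}"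
    by (rule inj_onI) (use lam0 in \<open>auto simp: fext2\<close>)
  have im1: "fext f 2 cs 1 ` {0..c} \<subseteq> {mu..1}"
  proof
    fix z assume "z \<in> fext f 2 cs 1 ` {0..c}"
    then obtain x where x: "0 \<le> x" "x \<le> c" "z = lam * x + mu" using fext1 by auto
    have "lam * x \<le> lam * c" using x lam0 by simp
    moreover have "0 \<le> lam * x" using x lam0 by simp
    ultimately show "z \<in> {mu..1}" using x lamc by simp
  qed
  have im2: "fext f 2 cs 2 ` {c..1} \<subseteq> {0..b}"
  proof
    fix z assume "z \<in> fext f 2 cs 2 ` {c..1}"
    then obtain x where x: "c \<le> x" "x \<le> 1" "z = lam * x + mu - 1" using fext2 by auto
    have "lam * c \<le> lam * x" using x lam0 by simp
    moreover have "lam * x \<le> lam" using x lam0 by simp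
    ultimately show "z \<in> {0..b}" using x lamc by (simp add: b_def)
  qed
  have disj: "fext f 2 cs 1 ` {0..c} \<inter> fext f 2 cs 2 ` {c..1} = {}"
    using im1 im2 b_mu by fastforce
  have disj': "fext f 2 cs (Suc 0) ` {0..c} \<inter> fext f 2 cs 2 ` {c..1} = {}" using disj by simp
  have disj'': "fext f 2 cs 2 ` {c..1} \<inter> fext f 2 cs (Suc 0) ` {0..c} = {}" using disj' by blast
  show ?thesis unfolding P2_def
  proof (intro conjI ballI impI)
    fix i assume "i \<in> {1..(2::nat)}"
    then have "i = 1 \<or> i = 2" by auto
    then show "inj_on (fext f 2 cs i) (closure (Xp 2 cs i))"
      using inj1 inj2 by (auto simp: cl1 cl1' cl2)
  next
    fix i j assume "i \<in> {1..(2::nat)}" "j \<in> {1..(2::nat)}" "i \<noteq> j"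
    then have "(i = 1 \<and> j = 2) \<or> (i = 2 \<and> j = 1)" by auto
    then show "fext f 2 cs i ` closure (Xp 2 cs i) \<inter> fext f 2 cs j ` closure (Xp 2 cs j) = {}"
    proof
      assume A: "i = 1 \<and> j = 2"
      then have ij: "i = 1" "j = 2" by auto
      show ?thesis unfolding ij cl1 cl2 by (rule disj)
    next
      assume A: "i = 2 \<and> j = 1"
      then have ij: "i = 2" "j = 1" by auto
      have d2: "fext f 2 cs 2 ` {c..1} \<inter> fext f 2 cs 1 ` {0..c} = {}" using disj by blast
      show ?thesis unfolding ij cl1 cl2 by (rule d2)
    qed
  qed
qed

lemma orb1: "(f ^^ Suc k) 1 = l k" unfolding funpow_Suc_right comp_def by (simp add: f1 l_def)
lemma orb0: "(f ^^ Suc k) 0 = r k" unfolding funpow_Suc_right comp_def by (simp add: f0 r_def)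

lemma Xtilde_eq: "Xtilde f 2 cs = {x. \<forall>n. 0 \<le> (f ^^ n) x \<and> (f ^^ n) x \<le> 1 \<and> (f ^^ n) x \<noteq> c}"
proof -
  have "Xtilde f 2 cs = {x. \<forall>n. x \<in> {0..1} \<and> (f ^^ n) x \<in> {0..1} - {c}}"
    by (auto simp: Xtilde_def XX_eq Delta_eq)
  also have "\<dots> = {x. \<forall>n. 0 \<le> (f ^^ n) x \<and> (f ^^ n) x \<le> 1 \<and> (f ^^ n) x \<noteq> c}"
  proof (intro Collect_cong iffI allI)
    fix x n assume "\<forall>n. x \<in> {0..1} \<and> (f ^^ n) x \<in> {0..1} - {c}"
    then show "0 \<le> (f ^^ n) x \<and> (f ^^ n) x \<le> 1 \<and> (f ^^ n) x \<noteq> c" by auto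
  next
    fix x n assume A: "\<forall>n. 0 \<le> (f ^^ n) x \<and> (f ^^ n) x \<le> 1 \<and> (f ^^ n) x \<noteq> c"
    then have "x \<in> {0..1}" using A[rule_format, of 0] by simp
    then show "x \<in> {0..1} \<and> (f ^^ n) x \<in> {0..1} - {c}" using A by auto
  qed
  finally show ?thesis .
qed

lemma P4_ok: "P4 f 2 cs"
proof -
  have o1: "0 \<le> (f ^^ n) 1 \<and> (f ^^ n) 1 \<le> 1 \<and> (f ^^ n) 1 \<noteq> c" for n
  proof (cases n)
    case 0 then show ?thesis using c_lt1 by simp
  next
    case (Suc k) then show ?thesis using orb1[of k] J_sub01[of "l k" k] lr_lt[of k] by auto
  qed
  have o0: "0 \<le> (f ^^ n) 0 \<and> (f ^^ n) 0 \<le> 1 \<and> (f ^^ n) 0 \<noteq> c" for n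
  proof (cases n)
    case 0 then show ?thesis using c_pos by simp
  next
    case (Suc k) then show ?thesis using orb0[of k] J_sub01[of "r k" k] lr_lt[of k] by auto
  qed
  have "(\<Union>i\<in>{1..2 - 1}. {fext f 2 cs i (cs i), fext f 2 cs (Suc i) (cs i)}) = {1, 0}"
    using fext1c fext2c by (simp add: numeral_2_eq_2[symmetric])
  then show ?thesis unfolding P4_def Xtilde_eq using o1 o0 by auto
qed

lemma P5_ok: "P5 f 2 cs"
proof -
  have "E \<subseteq> closure (range (\<lambda>n. (f ^^ n) 1))"
  proof
    fix x assume x: "x \<in> E"
    show "x \<in> closure (range (\<lambda>n. (f ^^ n) 1))" unfolding closure_approachable
    proof (intro allI impI)
      fix e :: real assume e: "0 < e"
      obtain y where y: "y \<in> E" "y \<noteq> x" "\<bar>y - x\<bar> < e" using E_perfect[OF x e] by blast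
      obtain k where k: "min x y \<le> l k" "r k \<le> max x y"
      proof (cases "x < y")
        case True then show ?thesis using between[OF x y(1) True] that by auto
      next
        case False then have "y < x" using y by auto
        then show ?thesis using between[OF y(1) x] that by auto
      qed
      have "\<bar>l k - x\<bar> < e" using k y lr_lt[of k] by (auto simp: min_def max_def split: if_splits)
      then show "\<exists>z\<in>range (\<lambda>n. (f ^^ n) 1). dist z x < e"
        using orb1[of k] by (intro bexI[of _ "l k"]) (auto simp: dist_real_def intro: range_eqI[of _ _ "Suc k"])
    qed
  qed
  then show ?thesis unfolding P5_def attractor_eq using fext1c by auto
qed


lemma M_left:
  assumes orb: "\<And>t. 0 \<le> (f ^^ t) x \<and> (f ^^ t) x \<le> 1 \<and> (f ^^ t) x \<noteq> c" and eps: "0 < \<epsilon>"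
  shows "\<exists>t\<ge>T. c - \<epsilon> < (f ^^ t) x \<and> (f ^^ t) x < c"
proof (rule ccontr)
  assume H0: "\<not> ?thesis"
  have H: "\<not> (c - \<epsilon> < (f ^^ t) x \<and> (f ^^ t) x < c)" if "t \<ge> T" for t using H0 that by blast
  define \<eta> where "\<eta> = \<epsilon> / 2"
  have eta: "0 < \<eta>" "\<eta> < \<epsilon>" using eps by (auto simp: \<eta>_def)
  define Ov where "Ov = {u. 0 \<le> u \<and> u \<le> 1 \<and> (\<exists>t\<ge>Suc T. (f ^^ t) x \<le> u \<and> u < (f ^^ t) x + \<eta>)}"
  have inv: "u \<noteq> c \<and> f u \<in> Ov" if u: "u \<in> Ov" for u
  proof -
    obtain t where t: "t \<ge> Suc T" "(f ^^ t) x \<le> u" "u < (f ^^ t) x + \<eta>" and u01: "0 \<le> u" "u \<le> 1"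
      using u by (auto simp: Ov_def)
    define y where "y = (f ^^ t) x"
    have y: "0 \<le> y" "y \<le> 1" "y \<noteq> c" using orb[of t] by (auto simp: y_def)
    have Hy: "\<not> (c - \<epsilon> < y \<and> y < c)" using H[of t] t by (auto simp: y_def)
    have d: "y \<le> u" "u < y + \<eta>" using t by (auto simp: y_def)
    have uc: "u \<noteq> c"
    proof
      assume "u = c"
      then have "c - \<epsilon> < y" "y < c" using d y eta by auto
      then show False using Hy by auto
    qed
    have ml: "lam * (u - y) \<le> u - y" using lam0 lam1 d by (intro mult_left_le_one_le) auto
    have m0: "0 \<le> lam * (u - y)" using lam0 d by simp
    have fy: "(f ^^ Suc t) x = f y" by (simp add: y_def)
    have A: "f y \<le> f u \<and> f u < f y + \<eta>"
    proof (cases "y < c")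
      case True
      have "u < c"
      proof (rule ccontr)
        assume "\<not> u < c"
        then have "c < u" using uc by auto
        then have "c - \<epsilon> < y" using d eta by auto
        then show False using Hy True by auto
      qed
      then have "f u = lam * u + mu" "f y = lam * y + mu" using fL' u01 y True by auto
      then show ?thesis using ml m0 d by (simp add: algebra_simps)
    next
      case False
      then have yc: "c < y" using y by auto
      then have "c < u" using d by auto
      then have "f u = lam * u + mu - 1" "f y = lam * y + mu - 1" using fR' u01 y yc by auto
      then show ?thesis using ml m0 d by (simp add: algebra_simps)
    qed
    have fu01: "0 \<le> f u" "f u \<le> 1" using fval[OF u01 uc] by auto
    have ex0: "Suc t \<ge> Suc T \<and> (f ^^ Suc t) x \<le> f u \<and> f u < (f ^^ Suc t) x + \<eta>"
      using t(1) A unfolding fy by simp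
    have ex: "\<exists>t'\<ge>Suc T. (f ^^ t') x \<le> f u \<and> f u < (f ^^ t') x + \<eta>"
      by (rule exI[of _ "Suc t"]) (rule ex0)
    have "f u \<in> Ov" unfolding Ov_def mem_Collect_eq using fu01 ex by (intro conjI)
    then show ?thesis using uc by simp
  qed
  define P where "P k = (\<exists>u\<in>Ov. l k < u \<and> u < r k)" for k
  have Pstep: "P (Suc k)" if Pk: "P k" for k
  proof -
    obtain u where u: "u \<in> Ov" "l k < u" "u < r k" using Pk unfolding P_def by blast
    have u01: "0 \<le> u" "u \<le> 1" using u by (auto simp: Ov_def)
    have "f u \<in> {l (Suc k)<..<r (Suc k)}" using gap_step[OF u01, of k] inv[OF u(1)] u by auto
    then show "P (Suc k)" using inv[OF u(1)] unfolding P_def by auto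
  qed
  obtain k0 where k0: "P k0"
  proof -
    define y where "y = (f ^^ Suc T) x"
    have y: "0 < y" "y < 1" using fval[of "(f ^^ T) x"] orb[of T] by (auto simp: y_def)
    define q where "q = min (y + \<eta>) 1"
    have q: "y < q" "q \<le> 1" "q \<le> y + \<eta>" using y eta by (auto simp: q_def)
    obtain k z where kz: "y < z" "z < q" "l k < z" "z < r k"
      using no_interval[of y q] y q by auto
    have ex0: "Suc T \<ge> Suc T \<and> (f ^^ Suc T) x \<le> z \<and> z < (f ^^ Suc T) x + \<eta>"
      using kz q unfolding y_def by simp
    have ex: "\<exists>t'\<ge>Suc T. (f ^^ t') x \<le> z \<and> z < (f ^^ t') x + \<eta>"
      by (rule exI[of _ "Suc T"]) (rule ex0)
    have z01: "0 \<le> z" "z \<le> 1" using kz y q by auto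
    have "z \<in> Ov" unfolding Ov_def mem_Collect_eq using z01 ex by (intro conjI)
    then show ?thesis using that kz by (auto simp: P_def)
  qed
  have Pall: "P (k0 + j)" for j
    by (induction j) (use k0 Pstep in auto)
  obtain k where k: "k \<ge> k0" "c - \<eta> < l k" "r k < c" using gap_near_c_left[OF eta(1)] by blast
  have "P k" using Pall[of "k - k0"] k by simp
  then obtain u where u: "u \<in> Ov" "l k < u" "u < r k" by (auto simp: P_def)
  then obtain t where t: "t \<ge> Suc T" "(f ^^ t) x \<le> u" "u < (f ^^ t) x + \<eta>" by (auto simp: Ov_def)
  have "c - \<epsilon> < (f ^^ t) x" "(f ^^ t) x < c" using t u k eta unfolding \<eta>_def by auto
  then show False using H[of t] t by auto
qed

lemma M_right:
  assumes orb: "\<And>t. 0 \<le> (f ^^ t) x \<and> (f ^^ t) x \<le> 1 \<and> (f ^^ t) x \<noteq> c" and eps: "0 < \<epsilon>"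
  shows "\<exists>t\<ge>T. c < (f ^^ t) x \<and> (f ^^ t) x < c + \<epsilon>"
proof (rule ccontr)
  assume H0: "\<not> ?thesis"
  have H: "\<not> (c < (f ^^ t) x \<and> (f ^^ t) x < c + \<epsilon>)" if "t \<ge> T" for t using H0 that by blast
  define \<eta> where "\<eta> = \<epsilon> / 2"
  have eta: "0 < \<eta>" "\<eta> < \<epsilon>" using eps by (auto simp: \<eta>_def)
  define Ov where "Ov = {u. 0 \<le> u \<and> u \<le> 1 \<and> (\<exists>t\<ge>Suc T. (f ^^ t) x - \<eta> < u \<and> u \<le> (f ^^ t) x)}"
  have inv: "u \<noteq> c \<and> f u \<in> Ov" if u: "u \<in> Ov" for u
  proof -
    obtain t where t: "t \<ge> Suc T" "(f ^^ t) x - \<eta> < u" "u \<le> (f ^^ t) x" and u01: "0 \<le> u" "u \<le> 1"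
      using u by (auto simp: Ov_def)
    define y where "y = (f ^^ t) x"
    have y: "0 \<le> y" "y \<le> 1" "y \<noteq> c" using orb[of t] by (auto simp: y_def)
    have Hy: "\<not> (c < y \<and> y < c + \<epsilon>)" using H[of t] t by (auto simp: y_def)
    have d: "y - \<eta> < u" "u \<le> y" using t by (auto simp: y_def)
    have uc: "u \<noteq> c"
    proof
      assume "u = c"
      then have "c < y" "y < c + \<epsilon>" using d y eta by auto
      then show False using Hy by auto
    qed
    have ml: "lam * (y - u) \<le> y - u" using lam0 lam1 d by (intro mult_left_le_one_le) auto
    have m0: "0 \<le> lam * (y - u)" using lam0 d by simp
    have fy: "(f ^^ Suc t) x = f y" by (simp add: y_def)
    have A: "f y - \<eta> < f u \<and> f u \<le> f y"
    proof (cases "c < y")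
      case True
      have "c < u"
      proof (rule ccontr)
        assume "\<not> c < u"
        then have "u < c" using uc by auto
        then have "y < c + \<epsilon>" using d eta by auto
        then show False using Hy True by auto
      qed
      then have "f u = lam * u + mu - 1" "f y = lam * y + mu - 1" using fR' u01 y True by auto
      then show ?thesis using ml m0 d by (simp add: algebra_simps)
    next
      case False
      then have yc: "y < c" using y by auto
      then have "u < c" using d by auto
      then have "f u = lam * u + mu" "f y = lam * y + mu" using fL' u01 y yc by auto
      then show ?thesis using ml m0 d by (simp add: algebra_simps)
    qed
    have fu01: "0 \<le> f u" "f u \<le> 1" using fval[OF u01 uc] by auto
    have ex0: "Suc t \<ge> Suc T \<and> (f ^^ Suc t) x - \<eta> < f u \<and> f u \<le> (f ^^ Suc t) x"
      using t(1) A unfolding fy by simp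
    have ex: "\<exists>t'\<ge>Suc T. (f ^^ t') x - \<eta> < f u \<and> f u \<le> (f ^^ t') x"
      by (rule exI[of _ "Suc t"]) (rule ex0)
    have "f u \<in> Ov" unfolding Ov_def mem_Collect_eq using fu01 ex by (intro conjI)
    then show ?thesis using uc by simp
  qed
  define P where "P k = (\<exists>u\<in>Ov. l k < u \<and> u < r k)" for k
  have Pstep: "P (Suc k)" if Pk: "P k" for k
  proof -
    obtain u where u: "u \<in> Ov" "l k < u" "u < r k" using Pk unfolding P_def by blast
    have u01: "0 \<le> u" "u \<le> 1" using u by (auto simp: Ov_def)
    have "f u \<in> {l (Suc k)<..<r (Suc k)}" using gap_step[OF u01, of k] inv[OF u(1)] u by auto
    then show "P (Suc k)" using inv[OF u(1)] unfolding P_def by auto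
  qed
  obtain k0 where k0: "P k0"
  proof -
    define y where "y = (f ^^ Suc T) x"
    have y: "0 < y" "y < 1" using fval[of "(f ^^ T) x"] orb[of T] by (auto simp: y_def)
    define p where "p = max (y - \<eta>) 0"
    have p: "p < y" "0 \<le> p" "y - \<eta> \<le> p" using y eta by (auto simp: p_def)
    obtain k z where kz: "p < z" "z < y" "l k < z" "z < r k"
      using no_interval[of p y] y p by auto
    have ex0: "Suc T \<ge> Suc T \<and> (f ^^ Suc T) x - \<eta> < z \<and> z \<le> (f ^^ Suc T) x"
      using kz p unfolding y_def by simp
    have ex: "\<exists>t'\<ge>Suc T. (f ^^ t') x - \<eta> < z \<and> z \<le> (f ^^ t') x"
      by (rule exI[of _ "Suc T"]) (rule ex0)
    have z01: "0 \<le> z" "z \<le> 1" using kz y p by auto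
    have "z \<in> Ov" unfolding Ov_def mem_Collect_eq using z01 ex by (intro conjI)
    then show ?thesis using that kz by (auto simp: P_def)
  qed
  have Pall: "P (k0 + j)" for j
    by (induction j) (use k0 Pstep in auto)
  obtain k where k: "k \<ge> k0" "c < l k" "r k < c + \<eta>" using gap_near_c_right[OF eta(1)] by blast
  have "P k" using Pall[of "k - k0"] k by simp
  then obtain u where u: "u \<in> Ov" "l k < u" "u < r k" by (auto simp: P_def)
  then obtain t where t: "t \<ge> Suc T" "(f ^^ t) x - \<eta> < u" "u \<le> (f ^^ t) x" by (auto simp: Ov_def)
  have "c < (f ^^ t) x" "(f ^^ t) x < c + \<epsilon>" using t u k eta unfolding \<eta>_def by auto
  then show False using H[of t] t by auto
qed


definition pre where "pre x = (if mu \<le> x then (x - mu) / lam else (x - mu + 1) / lam)"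

lemma pre_prop: assumes "0 < x" "x < 1" "x \<notin> {b..mu}"
  shows "0 < pre x \<and> pre x < 1 \<and> pre x \<noteq> c \<and> f (pre x) = x"
proof (cases "mu < x")
  case True
  define y where "y = pre x"
  have ly: "lam * y = x - mu" using True lam0 by (simp add: y_def pre_def)
  have "0 < lam * y" using ly True by simp
  then have y0: "0 < y" using lam0 by (simp add: zero_less_mult_iff)
  have "lam * y < lam * c" using ly lamc assms by simp
  then have yc: "y < c" using lam0 by simp
  have "f y = x" using fL'[of y] y0 yc ly by simp
  then show ?thesis using y0 yc c_lt1 by (simp add: y_def)
next
  case False
  have xm: "x \<noteq> mu" using assms(3) b_mu by auto
  then have xb: "x < b" using assms(3) False by auto
  define y where "y = pre x"
  have ly: "lam * y = x - mu + 1" using False xm lam0 by (simp add: y_def pre_def)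
  have "lam * c < lam * y" using ly lamc assms by simp
  then have yc: "c < y" using lam0 by simp
  have "lam * y < lam * 1" using ly xb by (simp add: b_def)
  then have y1: "y < 1" using lam0 by simp
  have "f y = x" using fR'[of y] y1 yc ly by simp
  then show ?thesis using y1 yc c_pos by (simp add: y_def)
qed

fun cc where "cc 0 = c" | "cc (Suc j) = pre (cc j)"

lemma cc_facts: "0 < cc j \<and> cc j < 1 \<and> (\<forall>k. cc j \<notin> {l k..r k})"
proof (induction j)
  case 0 then show ?case using c_pos c_lt1 c_notJ by simp
next
  case (Suc j)
  have "cc j \<notin> {l 0..r 0}" using Suc.IH by blast
  then have xn: "cc j \<notin> {b..mu}" by (simp add: l0 r0)
  have P: "0 < pre (cc j) \<and> pre (cc j) < 1 \<and> pre (cc j) \<noteq> c \<and> f (pre (cc j)) = cc j"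
    using pre_prop[OF _ _ xn] Suc.IH by auto
  have "pre (cc j) \<notin> {l k..r k}" for k
  proof
    assume "pre (cc j) \<in> {l k..r k}"
    then have "f (pre (cc j)) \<in> {l (Suc k)..r (Suc k)}" using J_img[of k] by blast
    then show False using P Suc.IH by auto
  qed
  then show ?case using P by simp
qed

lemma cc_step: "cc (Suc j) \<noteq> c \<and> f (cc (Suc j)) = cc j"
proof -
  have "cc j \<notin> {l 0..r 0}" using cc_facts[of j] by blast
  then have xn: "cc j \<notin> {b..mu}" by (simp add: l0 r0)
  then show ?thesis using pre_prop[OF _ _ xn] cc_facts[of j] by auto
qed

fun W :: "nat \<Rightarrow> nat \<Rightarrow> nat list" where "W j 0 = []" | "W j (Suc m) = W (Suc j) m @ [if cc (Suc j) < c then 1 else 2]"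

lemma W_len: "length (W j m) = m" by (induction m arbitrary: j) auto
lemma W_set: "set (W j m) \<subseteq> {1..2}" by (induction m arbitrary: j) auto

lemma W_ball: "\<exists>\<rho>>0. {cc j - \<rho><..<cc j + \<rho>} \<subseteq> atom f 2 cs (W j m)"
proof (induction m arbitrary: j)
  case 0
  have "0 < cc j" "cc j < 1" using cc_facts[of j] by auto
  then show ?case by (intro exI[of _ "min (cc j) (1 - cc j)"]) (auto simp: atom_Nil)
next
  case (Suc m)
  obtain \<rho> where \<rho>: "0 < \<rho>" "{cc (Suc j) - \<rho><..<cc (Suc j) + \<rho>} \<subseteq> atom f 2 cs (W (Suc j) m)"
    using Suc.IH[of "Suc j"] by blast
  define y where "y = cc (Suc j)"
  have yc: "y \<noteq> c" and fy: "f y = cc j" using cc_step[of j] by (auto simp: y_def)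
  have Asub: "atom f 2 cs (W (Suc j) m) \<subseteq> {0..1}" by (rule atom_sub)
  show ?case
  proof (cases "y < c")
    case True
    define \<rho>' where "\<rho>' = min \<rho> (c - y)"
    have \<rho>': "0 < \<rho>'" "\<rho>' \<le> \<rho>" "\<rho>' \<le> c - y" using \<rho> True by (auto simp: \<rho>'_def)
    have eqw: "atom f 2 cs (W j (Suc m)) = Fop f 2 cs 1 (atom f 2 cs (W (Suc j) m))"
      using True by (simp add: atom_snoc y_def)
    have "{cc j - lam * \<rho>'<..<cc j + lam * \<rho>'} \<subseteq> atom f 2 cs (W j (Suc m))"
    proof
      fix z assume z: "z \<in> {cc j - lam * \<rho>'<..<cc j + lam * \<rho>'}"
      define w where "w = (z - mu) / lam"
      have lw: "lam * w = z - mu" using lam0 by (simp add: w_def)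
      have "0 < y" using cc_facts[of "Suc j"] by (simp add: y_def)
      then have fy': "cc j = lam * y + mu" using fy fL'[of y] True by simp
      have "lam * (w - y) < lam * \<rho>'" "lam * (y - w) < lam * \<rho>'" using z lw fy' by (auto simp: algebra_simps)
      then have wy: "w - y < \<rho>'" "y - w < \<rho>'" using lam0 by auto
      then have wB: "w \<in> atom f 2 cs (W (Suc j) m)" using \<rho> \<rho>' unfolding y_def by auto
      then have w0: "0 \<le> w" using Asub by auto
      have wc: "w < c" using wy \<rho>' by auto
      have "f w = z" using fL'[OF w0 wc] lw by simp
      moreover have "w \<in> atom f 2 cs (W (Suc j) m) \<inter> Xp 2 cs 1" using wB w0 wc by (simp add: Xp1 Xp1')
      ultimately have "z \<in> f ` (atom f 2 cs (W (Suc j) m) \<inter> Xp 2 cs 1)" by blast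
      then show "z \<in> atom f 2 cs (W j (Suc m))" unfolding eqw Fop_def
        by (rule closure_subset[THEN subsetD])
    qed
    then show ?thesis using \<rho>' lam0 by (intro exI[of _ "lam * \<rho>'"]) auto
  next
    case False
    then have cy: "c < y" using yc by auto
    define \<rho>' where "\<rho>' = min \<rho> (y - c)"
    have \<rho>': "0 < \<rho>'" "\<rho>' \<le> \<rho>" "\<rho>' \<le> y - c" using \<rho> cy by (auto simp: \<rho>'_def)
    have eqw: "atom f 2 cs (W j (Suc m)) = Fop f 2 cs 2 (atom f 2 cs (W (Suc j) m))"
      using False by (simp add: atom_snoc y_def)
    have "{cc j - lam * \<rho>'<..<cc j + lam * \<rho>'} \<subseteq> atom f 2 cs (W j (Suc m))"
    proof
      fix z assume z: "z \<in> {cc j - lam * \<rho>'<..<cc j + lam * \<rho>'}"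
      define w where "w = (z - mu + 1) / lam"
      have lw: "lam * w = z - mu + 1" using lam0 by (simp add: w_def)
      have y1: "y \<le> 1" using cc_facts[of "Suc j"] by (simp add: y_def)
      have fy': "cc j = lam * y + mu - 1" using fy fR'[OF cy y1] by simp
      have "lam * (w - y) < lam * \<rho>'" "lam * (y - w) < lam * \<rho>'" using z lw fy' by (auto simp: algebra_simps)
      then have wy: "w - y < \<rho>'" "y - w < \<rho>'" using lam0 by auto
      then have wB: "w \<in> atom f 2 cs (W (Suc j) m)" using \<rho> \<rho>' unfolding y_def by auto
      then have w1: "w \<le> 1" using Asub by auto
      have wc: "c < w" using wy \<rho>' by auto
      have "f w = z" using fR'[OF wc w1] lw by simp
      moreover have "w \<in> atom f 2 cs (W (Suc j) m) \<inter> Xp 2 cs 2" using wB w1 wc by (simp add: Xp2)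
      ultimately have "z \<in> f ` (atom f 2 cs (W (Suc j) m) \<inter> Xp 2 cs 2)" by blast
      then show "z \<in> atom f 2 cs (W j (Suc m))" unfolding eqw Fop_def
        by (rule closure_subset[THEN subsetD])
    qed
    then show ?thesis using \<rho>' lam0 by (intro exI[of _ "lam * \<rho>'"]) auto
  qed
qed

lemma P6_ok: "P6 f 2 cs"
  unfolding P6_def
proof (intro ballI)
  fix x i assume x: "x \<in> Xtilde f 2 cs" and i: "i \<in> {1..2 - 1::nat}"
  then have i1: "i = 1" by simp
  have orb: "\<And>t. 0 \<le> (f ^^ t) x \<and> (f ^^ t) x \<le> 1 \<and> (f ^^ t) x \<noteq> c" using x by (simp add: Xtilde_eq)
  have main: "\<forall>n\<ge>1. \<exists>A\<in>atoms_of f 2 cs n x. c \<in> A \<and> (\<exists>t. (f ^^ (t + n)) x \<in> A \<inter> {0..<c})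
      \<and> (\<exists>t'. (f ^^ (t' + n)) x \<in> A \<inter> {c<..1})"
  proof (intro allI impI)
    fix n :: nat assume n: "1 \<le> n"
    obtain \<rho> where \<rho>: "0 < \<rho>" "{cc 0 - \<rho><..<cc 0 + \<rho>} \<subseteq> atom f 2 cs (W 0 n)" using W_ball[of 0 n] by blast
    define A where "A = atom f 2 cs (W 0 n)"
    have Aball: "{c - \<rho><..<c + \<rho>} \<subseteq> A" using \<rho> by (simp add: A_def)
    obtain t where t: "t \<ge> n" "c - min \<rho> c < (f ^^ t) x" "(f ^^ t) x < c"
      using M_left[OF orb, of "min \<rho> c" n] \<rho> c_pos by auto
    obtain t' where t': "t' \<ge> n" "c < (f ^^ t') x" "(f ^^ t') x < c + \<rho>"
      using M_right[OF orb, of \<rho> n] \<rho> by auto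
    have tt: "t - n + n = t" "t' - n + n = t'" using t t' by auto
    have "min \<rho> c \<le> \<rho>" by simp
    then have "c - \<rho> < (f ^^ t) x" using t(2) by linarith
    then have tA: "(f ^^ (t - n + n)) x \<in> A \<inter> {0..<c}" unfolding tt using t Aball orb[of t] by auto
    have tA': "(f ^^ (t' - n + n)) x \<in> A \<inter> {c<..1}" unfolding tt using t' Aball orb[of t'] by auto
    have cA: "c \<in> A" using Aball \<rho> by auto
    have "A \<in> atoms f 2 cs n" unfolding atoms_def A_def using W_len[of 0 n] W_set[of 0 n] cA
      by (auto simp: A_def)
    then have "A \<in> atoms_of f 2 cs n x" unfolding atoms_of_def using tA by blast
    then show "\<exists>A\<in>atoms_of f 2 cs n x. c \<in> A \<and> (\<exists>t. (f ^^ (t + n)) x \<in> A \<inter> {0..<c})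
      \<and> (\<exists>t'. (f ^^ (t' + n)) x \<in> A \<inter> {c<..1})" using cA tA tA' by blast
  qed
  have "c \<in> Delta_lr f 2 cs x" unfolding Delta_lr_def mem_Collect_eq
    apply (rule exI[of _ 1])
    apply (unfold Xp1 Xp2')
    using main by simp
  then show "cs i \<in> Delta_lr f 2 cs x" using i1 by simp
qed

end

theorem proposition1:
  fixes lam mu c :: real and f :: "real \<Rightarrow> real"
  assumes "0 < lam" "lam < 1" "0 < mu" "mu < 1" "lam + mu > 1"
    and "c = (1 - mu) / lam"
    and "f ` {0..1} \<subseteq> {0..1}"
    and "\<forall>x\<in>{0..<c}. f x = lam * x + mu"
    and "\<forall>x\<in>{c<..1}. f x = lam * x + mu - 1"
    and "\<forall>k::nat. c \<notin> (f ^^ k) ` {f 1 .. f 0}"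
  shows "let cs = (\<lambda>i::nat. if i = 0 then 0 else if i = 1 then c else (1::real))
         in P1 f 2 cs \<and> P2 f 2 cs \<and> P3 f 2 cs \<and> P4 f 2 cs \<and> P5 f 2 cs \<and> P6 f 2 cs"
proof -
  interpret cr lam mu c f using assms by (simp add: cr_def)
  show ?thesis unfolding Let_def using P1_ok P2_ok P3_ok P4_ok P5_ok P6_ok by blast
qed

end
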